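(* Let $G$ be a locally compact group, $K$ a compact subgroup of $G$, and $\omega$ a $K$-bi-invariant weight on $G$ with $\omega(e) = 1$. If $(G, K, \omega)$ is a weighted Gelfand pair, then for every $f \in C_c(K\setminus G/K)$, $$\int_G f(x)\,\omega(x)\,\omega(x^{-1})\,dx = \int_G f(x^{-1})\,\omega(x^{-1})\,\omega(x)\,dx.$$
   Context: A weight on $G$ is a continuous function $\omega: G \to (0,\infty)$; it is $K$-bi-invariant if $\omega(k_1 x k_2)=\omega(x)$ for all $x\in G$, $k_1,k_2\in K$. $e$ is the identity of $G$. Integration on $G$ is with respect to a fixed left Haar measure. The weighted convolution is $(f \ast_\omega g)(x) = \int_G f(y) g(y^{-1}x) \frac{\omega(y)\omega(y^{-1}x)}{\omega(x)}\,dy$. $\mathcal{L}^1_\omega(K\setminus G/K)$ is the space of (classes of) measurable $K$-bi-invariant $f:G\to\mathbb{C}$ with $\int_G|f|\omega<\infty$. $(G,K,\omega)$ is a weighted Gelfand pair if $(\mathcal{L}^1_\omega(K\setminus G/K),\ast_\omega)$ is commutative. $C_c(K\setminus G/K)$ is the space of continuous compactly supported $K$-bi-invariant complex functions on $G$. *)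

theory Defs
  imports "HOL-Analysis.Analysis"
begin

text \<open>Convention: the (not necessarily abelian) group G is a type of class group_add,
  written additively: the group product x y is x + y, the inverse x^-1 is - x,
  and the identity e is 0.\<close>

definition topological_group :: "'a::{group_add, topological_space} itself \<Rightarrow> bool" where
  "topological_group _ \<longleftrightarrow>
     continuous_on UNIV (\<lambda>p::'a \<times> 'a. fst p + snd p) \<and> continuous_on (UNIV::'a set) uminus"

definition left_haar_measure :: "'a::{group_add, topological_space} measure \<Rightarrow> bool" where
  "left_haar_measure \<mu> \<longleftrightarrow>
     sets \<mu> = sets borel \<and>
     (\<forall>x A. A \<in> sets borel \<longrightarrow> emeasure \<mu> ((\<lambda>y. x + y) ` A) = emeasure \<mu> A) \<and>
     (\<forall>C. compact C \<longrightarrow> emeasure \<mu> C < \<infinity>) \<and>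
     (\<forall>A. A \<in> sets borel \<longrightarrow> emeasure \<mu> A = (INF U \<in> {U. open U \<and> A \<subseteq> U}. emeasure \<mu> U)) \<and>
     (\<forall>U. open U \<longrightarrow> emeasure \<mu> U = (SUP C \<in> {C. compact C \<and> C \<subseteq> U}. emeasure \<mu> C)) \<and>
     emeasure \<mu> UNIV \<noteq> 0"

definition compact_subgroup :: "'a::{group_add, topological_space} set \<Rightarrow> bool" where
  "compact_subgroup K \<longleftrightarrow> compact K \<and> 0 \<in> K \<and>
     (\<forall>x\<in>K. \<forall>y\<in>K. x + y \<in> K) \<and> (\<forall>x\<in>K. - x \<in> K)"

definition bi_invariant :: "'a::group_add set \<Rightarrow> ('a \<Rightarrow> 'b) \<Rightarrow> bool" where
  "bi_invariant K f \<longleftrightarrow> (\<forall>x. \<forall>k1\<in>K. \<forall>k2\<in>K. f (k1 + x + k2) = f x)"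

definition weight :: "('a::topological_space \<Rightarrow> real) \<Rightarrow> bool" where
  "weight \<omega> \<longleftrightarrow> continuous_on UNIV \<omega> \<and> (\<forall>x. \<omega> x > 0)"

definition wconv :: "'a::{group_add, topological_space} measure \<Rightarrow> ('a \<Rightarrow> real)
    \<Rightarrow> ('a \<Rightarrow> complex) \<Rightarrow> ('a \<Rightarrow> complex) \<Rightarrow> 'a \<Rightarrow> complex" where
  "wconv \<mu> \<omega> f g x =
     (\<integral>y. f y * g (- y + x) * complex_of_real (\<omega> y * \<omega> (- y + x) / \<omega> x) \<partial>\<mu>)"

text \<open>Representatives of elements of L^1_omega(K\G/K).\<close>
definition L1w_biinv :: "'a::{group_add, topological_space} measure \<Rightarrow> ('a \<Rightarrow> real)
    \<Rightarrow> 'a set \<Rightarrow> ('a \<Rightarrow> complex) set" where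
  "L1w_biinv \<mu> \<omega> K = {f. f \<in> borel_measurable \<mu> \<and> bi_invariant K f \<and>
       (\<integral>\<^sup>+ x. ennreal (norm (f x) * \<omega> x) \<partial>\<mu>) < \<infinity>}"

text \<open>Commutativity of the algebra: f *_w g = g *_w f as classes (a.e.).\<close>
definition weighted_gelfand_pair :: "'a::{group_add, topological_space} measure
    \<Rightarrow> 'a set \<Rightarrow> ('a \<Rightarrow> real) \<Rightarrow> bool" where
  "weighted_gelfand_pair \<mu> K \<omega> \<longleftrightarrow>
     (\<forall>f\<in>L1w_biinv \<mu> \<omega> K. \<forall>g\<in>L1w_biinv \<mu> \<omega> K.
        AE x in \<mu>. wconv \<mu> \<omega> f g x = wconv \<mu> \<omega> g f x)"

definition Cc_biinv :: "'a::{group_add, topological_space} set \<Rightarrow> ('a \<Rightarrow> complex) set" where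
  "Cc_biinv K = {f. continuous_on UNIV f \<and> compact (closure {x. f x \<noteq> 0}) \<and> bi_invariant K f}"

end

theory Submission
  imports Defs
begin

lemma tg_add:
  assumes "topological_group TYPE('a::{group_add,topological_space})"
    and "continuous_on A f" "continuous_on A g"
  shows "continuous_on A (\<lambda>x. f x + g x :: 'a)"
proof -
  have c: "continuous_on UNIV (\<lambda>p::'a\<times>'a. fst p + snd p)"
    using assms(1) unfolding topological_group_def by blast
  show ?thesis
    using continuous_on_compose2[OF c continuous_on_Pair[OF assms(2,3)]] by simp
qed

lemma tg_neg:
  assumes "topological_group TYPE('a::{group_add,topological_space})"
    and "continuous_on A f"
  shows "continuous_on A (\<lambda>x. - f x :: 'a)"
proof -
  have c: "continuous_on (UNIV::'a set) uminus"
    using assms(1) unfolding topological_group_def by blast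
  show ?thesis
    using continuous_on_compose2[OF c assms(2)] by simp
qed

lemma tg_open_transl:
  assumes "topological_group TYPE('a::{group_add,topological_space})"
    and "open V"
  shows "open ((\<lambda>y. a + y) ` (V::'a set))"
proof -
  have eq: "(\<lambda>y. a + y) ` V = (\<lambda>y. -a + y) -` V"
  proof
    show "(\<lambda>y. a + y) ` V \<subseteq> (\<lambda>y. -a + y) -` V" by auto
    show "(\<lambda>y. -a + y) -` V \<subseteq> (\<lambda>y. a + y) ` V"
    proof
      fix z assume "z \<in> (\<lambda>y. -a + y) -` V"
      then have "-a + z \<in> V" by simp
      moreover have "z = a + (-a + z)" by simp
      ultimately show "z \<in> (\<lambda>y. a + y) ` V" by (rule image_eqI[rotated])
    qed
  qed
  have "continuous_on UNIV (\<lambda>y::'a. -a + y)"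
    by (rule tg_add[OF assms(1)]) (auto intro: continuous_on_const continuous_on_id)
  then have "open ((\<lambda>y. -a + y) -` V \<inter> UNIV)"
    using continuous_on_open_vimage[OF open_UNIV, of "\<lambda>y::'a. -a + y"] assms(2) by auto
  then show ?thesis using eq by simp
qed

lemma haar_open_pos:
  fixes \<mu> :: "'a::{group_add,topological_space} measure"
  assumes tg: "topological_group TYPE('a)" and H: "left_haar_measure \<mu>"
    and "open V" "v \<in> V"
  shows "emeasure \<mu> V \<noteq> 0"
proof
  assume V0: "emeasure \<mu> V = 0"
  note Hc = H[unfolded left_haar_measure_def]
  have sets: "sets \<mu> = sets borel" using Hc by (rule conjunct1)
  have inv: "\<forall>x A. A \<in> sets borel \<longrightarrow> emeasure \<mu> ((\<lambda>y. x + y) ` A) = emeasure \<mu> A"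
    using Hc[THEN conjunct2] by (rule conjunct1)
  have reg: "\<forall>U. open U \<longrightarrow> emeasure \<mu> U = (SUP C \<in> {C. compact C \<and> C \<subseteq> U}. emeasure \<mu> C)"
    using Hc[THEN conjunct2, THEN conjunct2, THEN conjunct2, THEN conjunct2] by (rule conjunct1)
  have nz: "emeasure \<mu> UNIV \<noteq> 0"
    using Hc[THEN conjunct2, THEN conjunct2, THEN conjunct2, THEN conjunct2] by (rule conjunct2)
  have Vb: "V \<in> sets borel" using assms(3) by simp
  have opn: "\<And>c. (\<lambda>y. (c + -v) + y) ` V \<in> sets \<mu>"
    using tg_open_transl[OF tg assms(3)] sets by simp
  have "emeasure \<mu> C = 0" if "compact C" for C
  proof -
    have cov: "C \<subseteq> (\<Union>c\<in>C. (\<lambda>y. (c + -v) + y) ` V)"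
    proof
      fix c assume c: "c \<in> C"
      have "c = (c + -v) + v" by (simp add: add.assoc)
      then have "c \<in> (\<lambda>y. (c + -v) + y) ` V" using assms(4) by (rule image_eqI)
      then show "c \<in> (\<Union>c\<in>C. (\<lambda>y. (c + -v) + y) ` V)" using c by (rule UN_I[rotated])
    qed
    have op2: "\<And>c. c \<in> C \<Longrightarrow> open ((\<lambda>y. (c + -v) + y) ` V)"
      using tg_open_transl[OF tg assms(3)] by simp
    have "\<exists>C'. C' \<subseteq> C \<and> finite C' \<and> C \<subseteq> (\<Union>c\<in>C'. (\<lambda>y. (c + -v) + y) ` V)"
    proof (rule compactE_image[OF that, of C "\<lambda>c. (\<lambda>y. (c + -v) + y) ` V"])
      show "\<And>T. T \<in> C \<Longrightarrow> open ((\<lambda>y. (T + -v) + y) ` V)" by (rule op2)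
      show "C \<subseteq> (\<Union>c\<in>C. (\<lambda>y. (c + -v) + y) ` V)" by (rule cov)
    qed blast
    then obtain C' where C': "C' \<subseteq> C" "finite C'" "C \<subseteq> (\<Union>c\<in>C'. (\<lambda>y. (c + -v) + y) ` V)"
      by blast
    have "emeasure \<mu> C \<le> emeasure \<mu> (\<Union>c\<in>C'. (\<lambda>y. (c + -v) + y) ` V)"
      using C'(3) opn C'(2) by (intro emeasure_mono sets.finite_UN) auto
    also have "\<dots> \<le> (\<Sum>c\<in>C'. emeasure \<mu> ((\<lambda>y. (c + -v) + y) ` V))"
      using C'(2) opn by (intro emeasure_subadditive_finite) auto
    also have "\<dots> = 0"
      using inv[rule_format, OF Vb] V0 by simp
    finally show ?thesis by simp
  qed
  moreover have ne: "{C::'a set. compact C} \<noteq> {}" using compact_empty by blast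
  ultimately have "emeasure \<mu> UNIV = 0" using reg[rule_format, OF open_UNIV] by simp
  then show False using nz by simp
qed


lemma cont_meas:
  fixes \<mu> :: "'a::topological_space measure" and h :: "'a \<Rightarrow> 'b::{real_normed_vector, second_countable_topology}"
  assumes "sets \<mu> = sets borel" "continuous_on UNIV h"
  shows "h \<in> borel_measurable \<mu>"
  using borel_measurable_continuous_onI[OF assms(2)] measurable_cong_sets[OF assms(1) refl] by blast

lemma param_cont:
  fixes \<mu> :: "'a::t2_space measure" and G :: "'p::topological_space \<Rightarrow> 'a \<Rightarrow> complex"
  assumes sets: "sets \<mu> = sets borel" and C: "compact C" "emeasure \<mu> C < \<infinity>"
    and G: "continuous_on UNIV (\<lambda>p. G (fst p) (snd p))" and e: "e > 0"
  shows "\<exists>V. open V \<and> x0 \<in> V \<and> (\<forall>x\<in>V. norm ((\<integral>y. indicator C y * G x y \<partial>\<mu>) - (\<integral>y. indicator C y * G x0 y \<partial>\<mu>)) \<le> e)"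
proof -
  define m where "m = measure \<mu> C"
  have m0: "m \<ge> 0" unfolding m_def by simp
  define d where "d = e / (m + 1)"
  have d0: "d > 0" unfolding d_def using e m0 by simp
  have Cs: "C \<in> sets \<mu>" using C(1) sets by (simp add: compact_imp_closed)
  have Gx: "continuous_on UNIV (G x)" for x
  proof -
    have "continuous_on UNIV (\<lambda>y. (x, y))" by (intro continuous_intros)
    from continuous_on_compose2[OF G this] show ?thesis by simp
  qed
  have int: "integrable \<mu> (\<lambda>y. indicator C y * G x y)" for x
  proof -
    have "compact (G x ` C)" using compact_continuous_image[OF continuous_on_subset[OF Gx] C(1)] by simp
    then have "bounded (G x ` C)" by (rule compact_imp_bounded)
    then obtain B where B: "B > 0" "\<forall>z\<in>G x ` C. norm z \<le> B" unfolding bounded_pos by blast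
    have i1: "integrable \<mu> (\<lambda>y. B * indicator C y :: real)"
      using Cs C(2) by simp
    have m1: "(\<lambda>y. indicator C y * G x y) \<in> borel_measurable \<mu>"
      using cont_meas[OF sets Gx] Cs by simp
    have a1: "AE y in \<mu>. norm (indicator C y * G x y) \<le> norm (B * indicator C y :: real)"
      using B by (auto simp: indicator_def)
    show ?thesis by (rule Bochner_Integration.integrable_bound[OF i1 m1 a1])
  qed
  define W where "W = {p. norm (G (fst p) (snd p) - G x0 (snd p)) < d}"
  have "open W"
  proof -
    have c: "continuous_on UNIV (\<lambda>p. G (fst p) (snd p) - G x0 (snd p))"
    proof (intro continuous_on_diff G)
      have "continuous_on UNIV (snd :: 'p \<times> 'a \<Rightarrow> 'a)" by (intro continuous_intros)
      from continuous_on_compose2[OF Gx[of x0] this] show "continuous_on UNIV (\<lambda>p::'p \<times> 'a. G x0 (snd p))" by simp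
    qed
    have "open ((\<lambda>p. G (fst p) (snd p) - G x0 (snd p)) -` ball 0 d \<inter> UNIV)"
      by (rule continuous_on_open_vimage[OF open_UNIV, THEN iffD1, OF c, rule_format, OF open_ball])
    moreover have "W = (\<lambda>p. G (fst p) (snd p) - G x0 (snd p)) -` ball 0 d \<inter> UNIV"
      unfolding W_def by auto
    ultimately show ?thesis by simp
  qed
  moreover have "{x0} \<times> C \<subseteq> W" unfolding W_def using d0 by auto
  ultimately have "\<exists>X0. x0 \<in> X0 \<and> open X0 \<and> X0 \<times> C \<subseteq> W"
    by (rule Elementary_Topology.tube_lemma[OF C(1)])
  then obtain V where V: "x0 \<in> V" "open V" "V \<times> C \<subseteq> W"
    by blast
  have "norm ((\<integral>y. indicator C y * G x y \<partial>\<mu>) - (\<integral>y. indicator C y * G x0 y \<partial>\<mu>)) \<le> e" if x: "x \<in> V" for x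
  proof -
    have "(\<integral>y. indicator C y * G x y \<partial>\<mu>) - (\<integral>y. indicator C y * G x0 y \<partial>\<mu>)
        = (\<integral>y. indicator C y * G x y - indicator C y * G x0 y \<partial>\<mu>)"
      using int by simp
    also have "norm \<dots> \<le> (\<integral>y. norm (indicator C y * G x y - indicator C y * G x0 y) \<partial>\<mu>)"
      by (rule integral_norm_bound)
    also have "\<dots> \<le> (\<integral>y. d * indicator C y \<partial>\<mu>)"
    proof (rule integral_mono')
      show "integrable \<mu> (\<lambda>y. d * indicator C y)" using Cs C(2) by simp
      show "0 \<le> d * indicator C y" for y using d0 by (simp add: indicator_def)
      show "norm (indicator C y * G x y - indicator C y * G x0 y) \<le> d * indicator C y" for y
      proof (cases "y \<in> C")
        case True
        then have "(x, y) \<in> W" using V(3) x by blast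
        then show ?thesis using True unfolding W_def by simp
      next
        case False then show ?thesis by simp
      qed
    qed
    also have "\<dots> = d * m" unfolding m_def using Cs by simp
    also have "\<dots> \<le> e"
      unfolding d_def using m0 e by (simp add: field_simps)
    finally show ?thesis .
  qed
  then have "open V \<and> x0 \<in> V \<and> (\<forall>x\<in>V. norm ((\<integral>y. indicator C y * G x y \<partial>\<mu>) - (\<integral>y. indicator C y * G x0 y \<partial>\<mu>)) \<le> e)"
    using V(1,2) by simp
  then show ?thesis by (rule exI)
qed

lemma nn_bound:
  fixes \<mu> :: "'a::t2_space measure"
  assumes sets: "sets \<mu> = sets borel" and C: "compact C" "emeasure \<mu> C < \<infinity>"
    and b: "\<And>x. norm (h x) * \<omega> x \<le> B * indicator C x"
  shows "(\<integral>\<^sup>+ x. ennreal (norm (h x) * \<omega> x) \<partial>\<mu>) < \<infinity>"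
proof -
  have Cs: "C \<in> sets \<mu>" using C(1) sets by (simp add: compact_imp_closed)
  have "(\<integral>\<^sup>+ x. ennreal (norm (h x) * \<omega> x) \<partial>\<mu>) \<le> (\<integral>\<^sup>+ x. ennreal B * indicator C x \<partial>\<mu>)"
  proof (rule nn_integral_mono)
    fix x
    show "ennreal (norm (h x) * \<omega> x) \<le> ennreal B * indicator C x"
    proof (cases "x \<in> C")
      case True then show ?thesis using b[of x] by (simp add: ennreal_leI)
    next
      case False then have "norm (h x) * \<omega> x \<le> 0" using b[of x] by simp
      then show ?thesis using False by (simp add: ennreal_eq_0_iff)
    qed
  qed
  also have "\<dots> = ennreal B * emeasure \<mu> C" using Cs by (simp add: nn_integral_cmult_indicator)
  also have "\<dots> < \<infinity>" using C(2) by (simp add: ennreal_mult_less_top)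
  finally show ?thesis .
qed


theorem mainTheorem7:
  fixes \<mu> :: "'a::{group_add, t2_space} measure"
    and K :: "'a set" and \<omega> :: "'a \<Rightarrow> real" and f :: "'a \<Rightarrow> complex"
  assumes "topological_group TYPE('a)"
    and "locally_compact_space (euclidean :: 'a topology)"
    and "left_haar_measure \<mu>"
    and "compact_subgroup K"
    and "weight \<omega>" and "bi_invariant K \<omega>" and "\<omega> 0 = 1"
    and "weighted_gelfand_pair \<mu> K \<omega>"
    and "f \<in> Cc_biinv K"
  shows "(\<integral>x. f x * complex_of_real (\<omega> x * \<omega> (- x)) \<partial>\<mu>)
       = (\<integral>x. f (- x) * complex_of_real (\<omega> (- x) * \<omega> x) \<partial>\<mu>)"
proof -
  note tg = assms(1)
  note Hc = assms(3)[unfolded left_haar_measure_def]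
  have sets: "sets \<mu> = sets borel" using Hc by (rule conjunct1)
  have space: "space \<mu> = UNIV" using sets_eq_imp_space_eq[OF sets] by simp
  have finC': "\<forall>C. compact C \<longrightarrow> emeasure \<mu> C < \<infinity>"
    using Hc[THEN conjunct2, THEN conjunct2] by (rule conjunct1)
  note finC = finC'[rule_format]
  have Cc: "continuous_on UNIV f \<and> compact (closure {x. f x \<noteq> 0}) \<and> bi_invariant K f"
    using assms(9) unfolding Cc_biinv_def by (rule CollectD)
  have fc: "continuous_on UNIV f" using Cc by (rule conjunct1)
  have Sc: "compact (closure {x. f x \<noteq> 0})" using Cc[THEN conjunct2] by (rule conjunct1)
  define S where "S = closure {x. f x \<noteq> 0}"
  have fbi: "bi_invariant K f" using Cc[THEN conjunct2] by (rule conjunct2)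
  have Sc': "compact S" unfolding S_def by (rule Sc)
  have fS: "\<And>y. f y \<noteq> 0 \<Longrightarrow> y \<in> S" unfolding S_def by (rule subsetD[OF closure_subset]) simp
  have wc: "continuous_on UNIV \<omega>" and wpos: "\<And>x. \<omega> x > 0"
    using assms(5) unfolding weight_def by auto
  have Kc: "compact K" and K0: "0 \<in> K" and Kadd: "\<And>x y. x \<in> K \<Longrightarrow> y \<in> K \<Longrightarrow> x + y \<in> K"
    and Kneg: "\<And>x. x \<in> K \<Longrightarrow> - x \<in> K"
    using assms(4) unfolding compact_subgroup_def by auto
  have "\<exists>U C. openin euclidean U \<and> compactin euclidean C \<and> (0::'a) \<in> U \<and> U \<subseteq> C"
    using assms(2) unfolding locally_compact_space_def by simp
  then obtain W0 W where W: "open W0" "compact W" "(0::'a) \<in> W0" "W0 \<subseteq> W"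
    by auto
  define D where "D = (\<lambda>p. fst p + (- fst (snd p) + fst (snd (snd p))) + snd (snd (snd p))) ` (K \<times> S \<times> W \<times> K)"
  have Dc: "compact D"
    unfolding D_def
  proof (rule compact_continuous_image)
    show "compact (K \<times> S \<times> W \<times> K)" using Kc Sc' W(2) by (intro compact_Times)
    show "continuous_on (K \<times> S \<times> W \<times> K) (\<lambda>p::'a\<times>'a\<times>'a\<times>'a. fst p + (- fst (snd p) + fst (snd (snd p))) + snd (snd (snd p)))"
      by (intro tg_add[OF tg] tg_neg[OF tg] continuous_on_fst continuous_on_snd continuous_on_id)
  qed
  have Dmem: "x \<in> D \<longleftrightarrow> (\<exists>k1\<in>K. \<exists>s\<in>S. \<exists>w\<in>W. \<exists>k2\<in>K. x = k1 + (-s + w) + k2)" for x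
  proof
    assume "x \<in> D"
    then obtain p where p: "p \<in> K \<times> S \<times> W \<times> K" "x = fst p + (- fst (snd p) + fst (snd (snd p))) + snd (snd (snd p))"
      unfolding D_def by blast
    obtain a b c d where "p = (a, b, c, d)" by (cases p) auto
    then show "\<exists>k1\<in>K. \<exists>s\<in>S. \<exists>w\<in>W. \<exists>k2\<in>K. x = k1 + (-s + w) + k2" using p by auto
  next
    assume "\<exists>k1\<in>K. \<exists>s\<in>S. \<exists>w\<in>W. \<exists>k2\<in>K. x = k1 + (-s + w) + k2"
    then obtain a b c d where "a \<in> K" "b \<in> S" "c \<in> W" "d \<in> K" "x = a + (-b + c) + d" by blast
    then show "x \<in> D" unfolding D_def by (intro image_eqI[of _ _ "(a,b,c,d)"]) auto
  qed
  have Ds: "D \<in> sets \<mu>" using Dc sets by (simp add: compact_imp_closed)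
  have Dbi: "bi_invariant K (\<lambda>y. indicator D y :: complex)"
    unfolding bi_invariant_def
  proof (intro allI ballI)
    fix x k1 k2 assume k: "k1 \<in> K" "k2 \<in> K"
    have "k1 + x + k2 \<in> D \<longleftrightarrow> x \<in> D"
    proof
      assume "x \<in> D"
      then obtain a s w b where abK: "a \<in> K" "s \<in> S" "w \<in> W" "b \<in> K" and E: "x = a + (-s + w) + b"
        using Dmem by blast
      have "k1 + x + k2 = (k1 + a) + (-s + w) + (b + k2)"
        unfolding E by (simp add: add.assoc)
      then show "k1 + x + k2 \<in> D" unfolding Dmem
        using Kadd[OF k(1) abK(1)] abK(2,3) Kadd[OF abK(4) k(2)] by blast
    next
      assume "k1 + x + k2 \<in> D"
      then obtain a s w b where abK: "a \<in> K" "s \<in> S" "w \<in> W" "b \<in> K" and E: "k1 + x + k2 = a + (-s + w) + b"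
        using Dmem by blast
      have "x = (-k1 + (k1 + x + k2)) + - k2"
        by (simp add: add.assoc)
      also have "\<dots> = (-k1 + (a + (-s + w) + b)) + - k2"
        unfolding E ..
      also have "\<dots> = (-k1 + a) + (-s + w) + (b + - k2)"
        by (simp only: add.assoc)
      finally have "x = (-k1 + a) + (-s + w) + (b + - k2)" .
      then show "x \<in> D" unfolding Dmem
        using Kadd[OF Kneg[OF k(1)] abK(1)] abK(2,3) Kadd[OF abK(4) Kneg[OF k(2)]] by blast
    qed
    then show "indicator D (k1 + x + k2) = (indicator D x :: complex)" by (simp add: indicator_def)
  qed
  have D1: "\<And>x y. x \<in> W0 \<Longrightarrow> y \<in> S \<Longrightarrow> - y + x \<in> D"
  proof -
    fix x y assume "x \<in> W0" "y \<in> S"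
    moreover have "- y + x = 0 + (- y + x) + 0" by simp
    ultimately show "- y + x \<in> D" using Dmem[of "- y + x"] K0 W(4) by blast
  qed
  have D2: "\<And>y. - y \<in> S \<Longrightarrow> y \<in> D"
  proof -
    fix y assume "- y \<in> S"
    moreover have "y = 0 + (- (- y) + 0) + 0" by simp
    moreover have "(0::'a) \<in> W" using W(3,4) by blast
    ultimately show "y \<in> D" using Dmem[of y] K0 by blast
  qed
  have Dcf: "emeasure \<mu> D < \<infinity>" using finC[OF Dc] .
  have Ss: "S \<in> sets \<mu>" using Sc' sets by (simp add: compact_imp_closed)
  have Sf: "emeasure \<mu> S < \<infinity>" using finC[OF Sc'] .
  have fcA: "\<And>A. continuous_on A f" using continuous_on_subset[OF fc] by blast
  have wcA: "\<And>A. continuous_on A \<omega>" using continuous_on_subset[OF wc] by blast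
  have fm: "f \<in> borel_measurable \<mu>" by (rule cont_meas[OF sets fc])
  have "compact ((\<lambda>x. norm (f x) * \<omega> x) ` S)"
    by (intro compact_continuous_image Sc' continuous_on_mult continuous_on_norm fcA wcA)
  then have "bounded ((\<lambda>x. norm (f x) * \<omega> x) ` S)" by (rule compact_imp_bounded)
  then obtain B1 where B1: "\<forall>z\<in>(\<lambda>x. norm (f x) * \<omega> x) ` S. norm z \<le> B1"
    unfolding bounded_pos by blast
  have b1: "norm (f x) * \<omega> x \<le> B1 * indicator S x" for x
  proof (cases "x \<in> S")
    case True
    then have "norm (norm (f x) * \<omega> x) \<le> B1" using B1 by blast
    then show ?thesis using True by simp
  next
    case False
    then have "f x = 0" using fS by blast
    then show ?thesis using False by simp
  qed
  have fL: "f \<in> L1w_biinv \<mu> \<omega> K"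
    unfolding L1w_biinv_def using fm fbi nn_bound[OF sets Sc' Sf b1] by blast
  define g where "g = (\<lambda>y. indicator D y :: complex)"
  have gm: "g \<in> borel_measurable \<mu>" unfolding g_def using Ds by simp
  have "compact (\<omega> ` D)"
    by (intro compact_continuous_image Dc wcA)
  then have "bounded (\<omega> ` D)" by (rule compact_imp_bounded)
  then obtain B2 where B2: "\<forall>z\<in>\<omega> ` D. norm z \<le> B2"
    unfolding bounded_pos by blast
  have b2: "norm (g x) * \<omega> x \<le> B2 * indicator D x" for x
  proof (cases "x \<in> D")
    case True
    then have "norm (\<omega> x) \<le> B2" using B2 by blast
    then show ?thesis using True by (simp add: g_def)
  next
    case False
    then show ?thesis by (simp add: g_def)
  qed
  have gbi: "bi_invariant K g" unfolding g_def by (rule Dbi)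
  have gL: "g \<in> L1w_biinv \<mu> \<omega> K"
    unfolding L1w_biinv_def using gm gbi nn_bound[OF sets Dc Dcf b2] by blast
  have AE: "AE x in \<mu>. wconv \<mu> \<omega> f g x = wconv \<mu> \<omega> g f x"
    using assms(8)[unfolded weighted_gelfand_pair_def, rule_format, OF fL gL] .
  define Ga where "Ga = (\<lambda>x y. f y * complex_of_real (\<omega> y * \<omega> (- y + x)))"
  define Gb where "Gb = (\<lambda>x y. f (- y + x) * complex_of_real (\<omega> y * \<omega> (- y + x)))"
  have h1: "continuous_on UNIV (\<lambda>p::'a\<times>'a. - snd p + fst p)"
    by (intro tg_add[OF tg] tg_neg[OF tg] continuous_on_fst continuous_on_snd continuous_on_id)
  have wh: "continuous_on UNIV (\<lambda>p::'a\<times>'a. \<omega> (- snd p + fst p))"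
    using continuous_on_compose2[OF wc h1] by simp
  have fh: "continuous_on UNIV (\<lambda>p::'a\<times>'a. f (- snd p + fst p))"
    using continuous_on_compose2[OF fc h1] by simp
  have ws: "continuous_on UNIV (\<lambda>p::'a\<times>'a. \<omega> (snd p))"
    using continuous_on_compose2[OF wc continuous_on_snd[OF continuous_on_id]] by simp
  have fs: "continuous_on UNIV (\<lambda>p::'a\<times>'a. f (snd p))"
    using continuous_on_compose2[OF fc continuous_on_snd[OF continuous_on_id]] by simp
  have Gac: "continuous_on UNIV (\<lambda>p::'a\<times>'a. Ga (fst p) (snd p))"
    unfolding Ga_def by (intro continuous_on_mult continuous_on_of_real fs ws wh)
  have Gbc: "continuous_on UNIV (\<lambda>p::'a\<times>'a. Gb (fst p) (snd p))"
    unfolding Gb_def by (intro continuous_on_mult continuous_on_of_real fh ws wh)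
  define a where "a = (\<lambda>x. \<integral>y. indicator S y * Ga x y \<partial>\<mu>)"
  define b where "b = (\<lambda>x. \<integral>y. indicator D y * Gb x y \<partial>\<mu>)"
  have wfg: "wconv \<mu> \<omega> f g x = a x * complex_of_real (1 / \<omega> x)" if x: "x \<in> W0" for x
  proof -
    have "wconv \<mu> \<omega> f g x = (\<integral>y. indicator S y * Ga x y * complex_of_real (1 / \<omega> x) \<partial>\<mu>)"
      unfolding wconv_def
    proof (rule Bochner_Integration.integral_cong[OF refl])
      fix y
      show "f y * g (- y + x) * complex_of_real (\<omega> y * \<omega> (- y + x) / \<omega> x) =
          indicator S y * Ga x y * complex_of_real (1 / \<omega> x)"
      proof (cases "f y = 0")
        case True then show ?thesis by (simp add: Ga_def)
      next
        case False
        then have "y \<in> S" using fS by blast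
        then have "- y + x \<in> D" using D1 x by blast
        then show ?thesis using \<open>y \<in> S\<close> by (simp add: Ga_def g_def divide_inverse)
      qed
    qed
    also have "\<dots> = a x * complex_of_real (1 / \<omega> x)" unfolding a_def by simp
    finally show ?thesis .
  qed
  have wgf: "wconv \<mu> \<omega> g f x = b x * complex_of_real (1 / \<omega> x)" for x
  proof -
    have "wconv \<mu> \<omega> g f x = (\<integral>y. indicator D y * Gb x y * complex_of_real (1 / \<omega> x) \<partial>\<mu>)"
      unfolding wconv_def
    proof (rule Bochner_Integration.integral_cong[OF refl])
      fix y
      show "g y * f (- y + x) * complex_of_real (\<omega> y * \<omega> (- y + x) / \<omega> x) =
          indicator D y * Gb x y * complex_of_real (1 / \<omega> x)"
        by (simp add: Gb_def g_def divide_inverse)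
    qed
    also have "\<dots> = b x * complex_of_real (1 / \<omega> x)" unfolding b_def by simp
    finally show ?thesis .
  qed
  have ab0: "a 0 = b 0"
  proof (rule ccontr)
    assume ne: "a 0 \<noteq> b 0"
    define e where "e = norm (a 0 - b 0) / 3"
    have e0: "e > 0" unfolding e_def using ne by simp
    obtain V1 where V1: "open V1" "0 \<in> V1" "\<forall>x\<in>V1. norm (a x - a 0) \<le> e"
      using param_cont[OF sets Sc' Sf Gac e0, of 0] unfolding a_def by blast
    obtain V2 where V2: "open V2" "0 \<in> V2" "\<forall>x\<in>V2. norm (b x - b 0) \<le> e"
      using param_cont[OF sets Dc Dcf Gbc e0, of 0] unfolding b_def by blast
    define V where "V = V1 \<inter> V2 \<inter> W0"
    have Vo: "open V" unfolding V_def using V1(1) V2(1) W(1) by blast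
    have V0: "0 \<in> V" unfolding V_def using V1(2) V2(2) W(3) by blast
    obtain N where N: "{x \<in> space \<mu>. \<not> wconv \<mu> \<omega> f g x = wconv \<mu> \<omega> g f x} \<subseteq> N"
      "emeasure \<mu> N = 0" "N \<in> sets \<mu>"
      using AE by (rule AE_E)
    have "V \<subseteq> {x \<in> space \<mu>. \<not> wconv \<mu> \<omega> f g x = wconv \<mu> \<omega> g f x}"
    proof
      fix x assume xV: "x \<in> V"
      have axb: "a x \<noteq> b x"
      proof
        assume eq: "a x = b x"
        have "a 0 - b 0 = (a 0 - a x) + (b x - b 0)" using eq by simp
        then have "norm (a 0 - b 0) \<le> norm (a 0 - a x) + norm (b x - b 0)"
          by (metis norm_triangle_ineq)
        also have "\<dots> = norm (a x - a 0) + norm (b x - b 0)" by (simp add: norm_minus_commute)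
        also have "\<dots> \<le> e + e" using V1(3) V2(3) xV unfolding V_def by (intro add_mono) auto
        finally show False unfolding e_def using ne by simp
      qed
      have "x \<in> W0" using xV unfolding V_def by blast
      then have "wconv \<mu> \<omega> f g x \<noteq> wconv \<mu> \<omega> g f x"
        using wfg wgf axb wpos[of x] by simp
      then show "x \<in> {x \<in> space \<mu>. \<not> wconv \<mu> \<omega> f g x = wconv \<mu> \<omega> g f x}"
        using space by simp
    qed
    then have "V \<subseteq> N" using N(1) by (rule subset_trans)
    then have "emeasure \<mu> V \<le> emeasure \<mu> N" using N(3) by (rule emeasure_mono)
    then have "emeasure \<mu> V = 0" using N(2) by simp
    then show False using haar_open_pos[OF tg assms(3) Vo V0] by simp
  qed
  have "(\<integral>x. f x * complex_of_real (\<omega> x * \<omega> (- x)) \<partial>\<mu>) = a 0"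
    unfolding a_def
  proof (rule Bochner_Integration.integral_cong[OF refl])
    fix y
    show "f y * complex_of_real (\<omega> y * \<omega> (- y)) = indicator S y * Ga 0 y"
      using fS[of y] by (cases "f y = 0") (auto simp: Ga_def)
  qed
  also have "\<dots> = b 0" by (rule ab0)
  also have "\<dots> = (\<integral>x. f (- x) * complex_of_real (\<omega> (- x) * \<omega> x) \<partial>\<mu>)"
    unfolding b_def
  proof (rule Bochner_Integration.integral_cong[OF refl])
    fix y
    show "indicator D y * Gb 0 y = f (- y) * complex_of_real (\<omega> (- y) * \<omega> y)"
    proof (cases "f (- y) = 0")
      case True then show ?thesis by (simp add: Gb_def)
    next
      case False
      then have "y \<in> D" using fS D2 by blast
      then show ?thesis by (simp add: Gb_def mult.commute)
    qed
  qed
  finally show ?thesis .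
qed
end
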